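(* Let $(V,\nu)$ and $(W,\mu)$ be strongly complete PN-spaces and let $T:V\to W$ be a linear operator with closed graph, i.e. whenever $x_n\to x$ strongly in $V$ and $Tx_n\to y$ strongly in $W$, then $y=Tx$. Then $T\in B(V,W)$.
   Context: A distance distribution function is a map $F:[-\infty,+\infty]\to[0,1]$ that is nondecreasing, left-continuous on $\mathbb{R}$, with $F(-\infty)=0$, $F(+\infty)=1$ and $F(0)=0$; the set of these is $\Delta^+$. $\mathcal{D}^+\subseteq\Delta^+$ denotes the proper ones, i.e. those with $\lim_{x\to+\infty}F(x)=1$. $H_0\in\Delta^+$ is $H_0(x)=0$ for $x\le 0$ and $H_0(x)=1$ for $x>0$. For $F,G\in\Delta^+$ let $\tau_M(F,G)(x)=\sup\{\min(F(s),G(t)) : s+t=x\}$. In this paper a PN-space $(V,\nu)$ is a real vector space $V$ with a map $\nu:V\to\Delta^+$, $p\mapsto\nu_p$, such that for all $p,q\in V$: $\nu_p=H_0$ iff $p=0$; $\nu_{p+q}\ge\tau_M(\nu_p,\nu_q)$ pointwise; and $\nu_{\alpha p}(x)=\nu_p(x/|\alpha|)$ for all real $\alpha\neq0$ and $x\ge 0$. Standing assumption: $\nu_p\in\mathcal{D}^+$ for every $p\in V$. For $x\in V$ and $w\in(0,1)$ put $\|x\|_w=\sup\{t\in\mathbb{R}:\nu_x(t)<w\}$; for each $w$ this is a norm on $V$, and $w\mapsto\|x\|_w$ is nondecreasing. The strong topology on $V$ is generated by the neighbourhoods $N_p(t)=\{q\in V:\nu_{p-q}(t)>1-t\}$, $p\in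 V$, $t>0$; equivalently the balls $\{x:\|x-p\|_w<r\}$ form a basis for it. A sequence $(p_n)$ converges strongly to $p$ if for every $t>0$ one has $p_n\in N_p(t)$ for all large $n$; it is strongly Cauchy if for every $t>0$ there is $N$ with $\nu_{p_n-p_m}(t)>1-t$ for all $m,n>N$. $(V,\nu)$ is strongly complete if every strongly Cauchy sequence converges strongly. $B(V,W)$ denotes the set of linear operators $V\to W$ that are continuous for the strong topologies. *)

theory Defs
  imports "HOL-Analysis.Analysis"
begin

text \<open>Distance distribution functions, represented by their restriction to the reals.
  The values at -infinity (= 0) and +infinity (= 1) are fixed by convention and carry no
  information; the standing assumption that every nu_p is proper is included below.\<close>

definition ddf :: "(real \<Rightarrow> real) \<Rightarrow> bool" where
  "ddf F \<longleftrightarrow> mono F \<and> (\<forall>x. continuous (at_left x) F) \<and>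
     (\<forall>x. 0 \<le> F x \<and> F x \<le> 1) \<and> F 0 = 0"

definition proper_ddf :: "(real \<Rightarrow> real) \<Rightarrow> bool" where
  "proper_ddf F \<longleftrightarrow> ddf F \<and> (F \<longlongrightarrow> 1) at_top"

definition H0 :: "real \<Rightarrow> real" where
  "H0 x = (if x \<le> 0 then 0 else 1)"

definition tauM :: "(real \<Rightarrow> real) \<Rightarrow> (real \<Rightarrow> real) \<Rightarrow> real \<Rightarrow> real" where
  "tauM F G x = Sup {min (F s) (G t) | s t. s + t = x}"

definition PN_space :: "('a::real_vector \<Rightarrow> real \<Rightarrow> real) \<Rightarrow> bool" where
  "PN_space \<nu> \<longleftrightarrow>
     (\<forall>p. proper_ddf (\<nu> p)) \<and>
     (\<forall>p. \<nu> p = H0 \<longleftrightarrow> p = 0) \<and>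
     (\<forall>p q x. tauM (\<nu> p) (\<nu> q) x \<le> \<nu> (p + q) x) \<and>
     (\<forall>\<alpha> p x. \<alpha> \<noteq> 0 \<and> x \<ge> 0 \<longrightarrow> \<nu> (\<alpha> *\<^sub>R p) x = \<nu> p (x / \<bar>\<alpha>\<bar>))"

definition strong_nbhd :: "('a::real_vector \<Rightarrow> real \<Rightarrow> real) \<Rightarrow> 'a \<Rightarrow> real \<Rightarrow> 'a set" where
  "strong_nbhd \<nu> p t = {q. \<nu> (p - q) t > 1 - t}"

definition strong_topology :: "('a::real_vector \<Rightarrow> real \<Rightarrow> real) \<Rightarrow> 'a topology" where
  "strong_topology \<nu> = topology (\<lambda>U. \<forall>p\<in>U. \<exists>t>0. strong_nbhd \<nu> p t \<subseteq> U)"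

definition strong_conv :: "('a::real_vector \<Rightarrow> real \<Rightarrow> real) \<Rightarrow> (nat \<Rightarrow> 'a) \<Rightarrow> 'a \<Rightarrow> bool" where
  "strong_conv \<nu> xs p \<longleftrightarrow> (\<forall>t>0. eventually (\<lambda>n. xs n \<in> strong_nbhd \<nu> p t) sequentially)"

definition strong_Cauchy :: "('a::real_vector \<Rightarrow> real \<Rightarrow> real) \<Rightarrow> (nat \<Rightarrow> 'a) \<Rightarrow> bool" where
  "strong_Cauchy \<nu> xs \<longleftrightarrow> (\<forall>t>0. \<exists>N. \<forall>m n. m > N \<and> n > N \<longrightarrow> \<nu> (xs n - xs m) t > 1 - t)"

definition strongly_complete :: "('a::real_vector \<Rightarrow> real \<Rightarrow> real) \<Rightarrow> bool" where
  "strongly_complete \<nu> \<longleftrightarrow> (\<forall>xs. strong_Cauchy \<nu> xs \<longrightarrow> (\<exists>p. strong_conv \<nu> xs p))"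

definition bounded_ops ::
  "('a::real_vector \<Rightarrow> real \<Rightarrow> real) \<Rightarrow> ('b::real_vector \<Rightarrow> real \<Rightarrow> real) \<Rightarrow> ('a \<Rightarrow> 'b) set" where
  "bounded_ops \<nu> \<mu> = {T. linear T \<and> continuous_map (strong_topology \<nu>) (strong_topology \<mu>) T}"

end

theory Submission
  imports Defs
begin

definition Uset :: "('a::real_vector \<Rightarrow> real \<Rightarrow> real) \<Rightarrow> real \<Rightarrow> 'a set" where
  "Uset \<nu> t = {x. \<nu> x t > 1 - t}"

lemma PN_mono: "PN_space \<nu> \<Longrightarrow> s \<le> t \<Longrightarrow> \<nu> x s \<le> \<nu> x t"
  unfolding PN_space_def proper_ddf_def ddf_def mono_def by blast

lemma PN_le1: "PN_space \<nu> \<Longrightarrow> \<nu> x s \<le> 1"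
  unfolding PN_space_def proper_ddf_def ddf_def by blast

lemma PN_zero: "PN_space \<nu> \<Longrightarrow> \<nu> 0 = H0"
  unfolding PN_space_def by blast

lemma PN_scale: "PN_space \<nu> \<Longrightarrow> a \<noteq> 0 \<Longrightarrow> x \<ge> 0 \<Longrightarrow> \<nu> (a *\<^sub>R p) x = \<nu> p (x / \<bar>a\<bar>)"
  unfolding PN_space_def by blast

lemma U_pos: "PN_space \<nu> \<Longrightarrow> x \<in> Uset \<nu> t \<Longrightarrow> t > 0"
  using PN_le1[of \<nu> x t] unfolding Uset_def by force

lemma U_zero: "PN_space \<nu> \<Longrightarrow> t > 0 \<Longrightarrow> 0 \<in> Uset \<nu> t"
  using PN_zero[of \<nu>] unfolding Uset_def H0_def by auto

lemma U_mono: "PN_space \<nu> \<Longrightarrow> s \<le> t \<Longrightarrow> x \<in> Uset \<nu> s \<Longrightarrow> x \<in> Uset \<nu> t"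
  using PN_mono[of \<nu> s t x] unfolding Uset_def by auto

lemma U_add:
  assumes P: "PN_space \<nu>" and x: "x \<in> Uset \<nu> a" and y: "y \<in> Uset \<nu> b"
  shows "x + y \<in> Uset \<nu> (a + b)"
proof -
  have a: "a > 0" and b: "b > 0" using U_pos[OF P] x y by auto
  have "min (\<nu> x a) (\<nu> y b) \<le> tauM (\<nu> x) (\<nu> y) (a + b)"
    unfolding tauM_def
  proof (rule cSup_upper)
    show "min (\<nu> x a) (\<nu> y b) \<in> {min (\<nu> x s) (\<nu> y t) |s t. s + t = a + b}" by blast
    show "bdd_above {min (\<nu> x s) (\<nu> y t) |s t. s + t = a + b}"
      using PN_le1[OF P] by (auto intro!: bdd_aboveI[of _ 1] simp: min_le_iff_disj)
  qed
  also have "\<dots> \<le> \<nu> (x + y) (a + b)" using P unfolding PN_space_def by blast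
  finally show ?thesis using x y a b unfolding Uset_def by auto
qed

lemma U_neg:
  assumes P: "PN_space \<nu>" and x: "x \<in> Uset \<nu> s"
  shows "- x \<in> Uset \<nu> s"
proof -
  have "s > 0" using U_pos[OF P x] .
  then have "\<nu> ((-1) *\<^sub>R x) s = \<nu> x s" using PN_scale[OF P, of "-1" s x] by simp
  then show ?thesis using x unfolding Uset_def by simp
qed

lemma U_diff: "PN_space \<nu> \<Longrightarrow> x \<in> Uset \<nu> a \<Longrightarrow> y \<in> Uset \<nu> b \<Longrightarrow> x - y \<in> Uset \<nu> (a + b)"
  using U_add[of \<nu> x a "-y" b] U_neg[of \<nu> y b] by simp

lemma U_scale_le1:
  assumes P: "PN_space \<nu>" and x: "x \<in> Uset \<nu> s" and al: "\<bar>\<alpha>\<bar> \<le> 1"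
  shows "\<alpha> *\<^sub>R x \<in> Uset \<nu> s"
proof (cases "\<alpha> = 0")
  case True then show ?thesis using U_zero[OF P U_pos[OF P x]] by simp
next
  case False
  have s: "s > 0" using U_pos[OF P x] .
  have "s \<le> s / \<bar>\<alpha>\<bar>" using False al s by (simp add: field_simps)
  then have "\<nu> x s \<le> \<nu> (\<alpha> *\<^sub>R x) s" using PN_scale[OF P False, of s x] s PN_mono[OF P] by simp
  then show ?thesis using x unfolding Uset_def by simp
qed

lemma U_scale_ge1:
  assumes P: "PN_space \<nu>" and x: "x \<in> Uset \<nu> s" and c: "c \<ge> 1"
  shows "c *\<^sub>R x \<in> Uset \<nu> (c * s)"
proof -
  have s: "s > 0" using U_pos[OF P x] .
  have "\<nu> (c *\<^sub>R x) (c * s) = \<nu> x s" using PN_scale[OF P, of c "c * s" x] s c by simp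
  moreover have "1 - s \<ge> 1 - c * s" using s c by (simp add: mult_le_cancel_right1)
  ultimately show ?thesis using x unfolding Uset_def by simp
qed

lemma nbhd_eq: "strong_nbhd \<nu> p t = {q. p - q \<in> Uset \<nu> t}"
  by (simp add: strong_nbhd_def Uset_def)

lemma geom_Cauchy:
  assumes P: "PN_space \<nu>" and g: "\<And>m n. m < n \<Longrightarrow> g m - g n \<in> Uset \<nu> (b m)"
    and b: "\<And>m. b m \<le> C * (1/2)^m" and C: "C > 0"
  shows "strong_Cauchy \<nu> g"
  unfolding strong_Cauchy_def
proof (intro allI impI)
  fix e :: real assume e: "e > 0"
  obtain N where N: "(1/2::real)^N < e / C" using real_arch_pow_inv[of "e/C" "1/2"] e C by auto
  have bm: "b m \<le> e" if "m > N" for m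
  proof -
    have "(1/2::real)^m \<le> (1/2)^N" using that by (intro power_decreasing) auto
    then have "C * (1/2)^m \<le> C * (1/2)^N" using C by simp
    also have "\<dots> < e" using N C by (simp add: field_simps)
    finally show ?thesis using b[of m] by simp
  qed
  show "\<exists>N. \<forall>m n. N < m \<and> N < n \<longrightarrow> 1 - e < \<nu> (g n - g m) e"
  proof (intro exI allI impI)
    fix m n assume mn: "N < m \<and> N < n"
    consider "m < n" | "n < m" | "m = n" by linarith
    then have "g n - g m \<in> Uset \<nu> e"
    proof cases
      case 1
      then have "- (g m - g n) \<in> Uset \<nu> (b m)" using U_neg[OF P g[OF 1]] by simp
      then show ?thesis using U_mono[OF P bm[of m]] mn by simp
    next
      case 2 then show ?thesis using U_mono[OF P bm[of n] g[OF 2]] mn by simp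
    next
      case 3 then show ?thesis using U_zero[OF P e] by simp
    qed
    then show "1 - e < \<nu> (g n - g m) e" unfolding Uset_def by simp
  qed
qed


lemma absorb:
  assumes Q: "PN_space \<mu>" and t: "t > 0"
  shows "\<exists>k. v /\<^sub>R real (Suc k) \<in> Uset \<mu> t"
proof -
  have "(\<mu> v \<longlongrightarrow> 1) at_top" using Q unfolding PN_space_def proper_ddf_def by blast
  then have "eventually (\<lambda>u. \<mu> v u > 1 - t) at_top"
    using t by (intro order_tendstoD) auto
  then obtain M where M: "\<And>u. u \<ge> M \<Longrightarrow> \<mu> v u > 1 - t"
    unfolding eventually_at_top_linorder by blast
  obtain k where k: "M / t < real k" using reals_Archimedean2 by blast
  have n: "real (Suc k) > 0" by simp
  have "M \<le> real (Suc k) * t" using k t by (simp add: field_simps)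
  then have "\<mu> v (real (Suc k) * t) > 1 - t" using M by blast
  moreover have "\<mu> (v /\<^sub>R real (Suc k)) t = \<mu> v (real (Suc k) * t)"
    using PN_scale[OF Q, of "inverse (real (Suc k))" t v] t by (simp add: field_simps)
  ultimately show ?thesis unfolding Uset_def by (intro exI[of _ k]) auto
qed

lemma almost:
  assumes P: "PN_space \<nu>" and Q: "PN_space \<mu>" and C: "strongly_complete \<nu>"
    and L: "linear T" and t: "t > 0"
  shows "\<exists>s>0. \<forall>x\<in>Uset \<nu> s. \<forall>\<rho>>0. \<exists>c. T c \<in> Uset \<mu> t \<and> x - c \<in> Uset \<nu> \<rho>"
proof -
  define A where "A k = {y. T (y /\<^sub>R real (Suc k)) \<in> Uset \<mu> (t/2)}" for k
  have absorbA: "\<exists>k. w \<in> A k" for w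
  proof -
    obtain k where "T w /\<^sub>R real (Suc k) \<in> Uset \<mu> (t/2)" using absorb[OF Q, of "t/2" "T w"] t by auto
    then show ?thesis unfolding A_def using linear_scale[OF L] by auto
  qed
  have B: "\<exists>k a r. r > 0 \<and> (\<forall>y. a - y \<in> Uset \<nu> r \<longrightarrow> (\<forall>\<rho>>0. \<exists>b\<in>A k. y - b \<in> Uset \<nu> \<rho>))"
  proof (rule ccontr)
    assume "\<not> ?thesis"
    then have H: "\<exists>y. a - y \<in> Uset \<nu> r \<and> (\<exists>\<rho>>0. \<forall>b\<in>A k. y - b \<notin> Uset \<nu> \<rho>)" if "r > 0" for k a r
      using that by blast
    define PP where "PP n zr \<longleftrightarrow> 0 < snd zr \<and> snd zr \<le> (1/2::real)^n" for n and zr :: "'a \<times> real"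
    define QQ where "QQ n zr zr' \<longleftrightarrow> snd zr' \<le> snd zr / 4 \<and> fst zr - fst zr' \<in> Uset \<nu> (snd zr / 4)
        \<and> (\<forall>b\<in>A n. fst zr' - b \<notin> Uset \<nu> (snd zr'))" for n and zr zr' :: "'a \<times> real"
    have "\<exists>f. \<forall>n. PP n (f n) \<and> QQ n (f n) (f (Suc n))"
    proof (rule dependent_nat_choice)
      show "\<exists>x. PP 0 x" unfolding PP_def by (intro exI[of _ "(0,1)"]) auto
    next
      fix zr n assume "PP n zr"
      obtain z r where zr: "zr = (z, r)" by force
      have r: "0 < r" "r \<le> (1/2)^n" using \<open>PP n zr\<close> zr unfolding PP_def by auto
      obtain y \<rho> where y: "z - y \<in> Uset \<nu> (r/4)" "\<rho> > 0" "\<forall>b\<in>A n. y - b \<notin> Uset \<nu> \<rho>"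
        using H[where k=n and a=z and r="r/4"] r by auto
      define r' where "r' = min \<rho> (r/4)"
      have r': "0 < r'" "r' \<le> r/4" "r' \<le> \<rho>" using r y unfolding r'_def by auto
      have "r' \<le> (1/2)^(Suc n)" using r' r by simp
      moreover have "\<forall>b\<in>A n. y - b \<notin> Uset \<nu> r'" using y(3) U_mono[OF P r'(3)] by blast
      ultimately show "\<exists>y. PP (Suc n) y \<and> QQ n zr y"
        using r' y zr unfolding PP_def QQ_def by (intro exI[of _ "(y, r')"]) auto
    qed
    then obtain f where f: "\<And>n. PP n (f n) \<and> QQ n (f n) (f (Suc n))" by blast
    define z where "z n = fst (f n)" for n
    define r where "r n = snd (f n)" for n
    have r0: "0 < r n" "r n \<le> (1/2)^n" for n using f[of n] unfolding PP_def r_def by auto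
    have r1: "r (Suc n) \<le> r n / 4" for n using f[of n] unfolding QQ_def r_def by auto
    have z1: "z n - z (Suc n) \<in> Uset \<nu> (r n / 4)" for n using f[of n] unfolding QQ_def r_def z_def by auto
    have zA: "b \<in> A n \<Longrightarrow> z (Suc n) - b \<notin> Uset \<nu> (r (Suc n))" for n b
      using f[of n] unfolding QQ_def r_def z_def by auto
    have inv: "n < m \<Longrightarrow> z n - z m \<in> Uset \<nu> (r n / 2 - r m / 2)" for n m
    proof (induction m)
      case 0 then show ?case by simp
    next
      case (Suc m)
      show ?case
      proof (cases "n = m")
        case True
        have le: "r n / 4 \<le> r n / 2 - r (Suc n) / 2" using r1[of n] r0[of n] by linarith
        show ?thesis using U_mono[OF P le z1[of n]] True by simp
      next
        case False
        then have "n < m" using Suc.prems by simp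
        then have s1: "z n - z m + (z m - z (Suc m)) \<in> Uset \<nu> (r n / 2 - r m / 2 + r m / 4)"
          using U_add[OF P Suc.IH z1[of m]] by simp
        have le: "r n / 2 - r m / 2 + r m / 4 \<le> r n / 2 - r (Suc m) / 2"
          using r1[of m] r0[of m] by linarith
        have "z n - z m + (z m - z (Suc m)) = z n - z (Suc m)" by simp
        then show ?thesis using U_mono[OF P le s1] by simp
      qed
    qed
    have inv2: "n < m \<Longrightarrow> z n - z m \<in> Uset \<nu> (r n / 2)" for n m
      using U_mono[OF P _ inv[of n m]] r0[of m] by simp
    have "strong_Cauchy \<nu> z"
      by (rule geom_Cauchy[OF P inv2, where C=1]) (use r0 in \<open>auto intro: order_trans[OF _ mult_left_mono[of 1 2]]\<close>)
    then obtain w where w: "strong_conv \<nu> z w" using C unfolding strongly_complete_def by blast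
    obtain k where k: "w \<in> A k" using absorbA by blast
    have "eventually (\<lambda>m. z m \<in> strong_nbhd \<nu> w (r (Suc k) / 2)) sequentially"
      using w r0[of "Suc k"] unfolding strong_conv_def by simp
    then obtain M where M: "\<And>m. m \<ge> M \<Longrightarrow> w - z m \<in> Uset \<nu> (r (Suc k) / 2)"
      unfolding eventually_sequentially nbhd_eq by blast
    define m where "m = max M (Suc (Suc k))"
    have "z (Suc k) - z m - (w - z m) \<in> Uset \<nu> (r (Suc k) / 2 + r (Suc k) / 2)"
      using U_diff[OF P inv2[of "Suc k" m] M[of m]] unfolding m_def by simp
    then have "z (Suc k) - w \<in> Uset \<nu> (r (Suc k))" by simp
    then show False using zA[OF k] by blast
  qed
  then obtain k a r where r: "r > 0"
    and B: "\<And>y (\<rho>::real). a - y \<in> Uset \<nu> r \<Longrightarrow> \<rho> > 0 \<Longrightarrow> \<exists>b\<in>A k. y - b \<in> Uset \<nu> \<rho>" by blast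
  define n where "n = real (Suc k)"
  have n: "n \<ge> 1" unfolding n_def by simp
  show ?thesis
  proof (intro exI[of _ "r / n"] conjI ballI allI impI)
    show "r / n > 0" using r n by simp
    fix x and \<rho> :: real assume x: "x \<in> Uset \<nu> (r / n)" and \<rho>: "\<rho> > 0"
    have nx: "n *\<^sub>R x \<in> Uset \<nu> r" using U_scale_ge1[OF P x n] n by simp
    obtain b1 where b1: "b1 \<in> A k" "a - b1 \<in> Uset \<nu> (\<rho>/2)"
      using B[of a "\<rho>/2"] U_zero[OF P r] \<rho> by auto
    obtain b2 where b2: "b2 \<in> A k" "(a - n *\<^sub>R x) - b2 \<in> Uset \<nu> (\<rho>/2)"
      using B[of "a - n *\<^sub>R x" "\<rho>/2"] nx \<rho> by auto
    define c where "c = (b1 - b2) /\<^sub>R n"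
    have "T c = T (b1 /\<^sub>R n) - T (b2 /\<^sub>R n)"
      unfolding c_def by (simp add: linear_diff[OF L] scaleR_diff_right)
    moreover have "T (b1 /\<^sub>R n) - T (b2 /\<^sub>R n) \<in> Uset \<mu> (t/2 + t/2)"
      using U_diff[OF Q] b1(1) b2(1) unfolding A_def n_def by blast
    ultimately have Tc: "T c \<in> Uset \<mu> t" by simp
    have "(a - b1) - ((a - n *\<^sub>R x) - b2) \<in> Uset \<nu> (\<rho>/2 + \<rho>/2)"
      using U_diff[OF P b1(2) b2(2)] .
    then have "n *\<^sub>R x - (b1 - b2) \<in> Uset \<nu> \<rho>" by (simp add: algebra_simps)
    moreover have inv1: "\<bar>inverse n\<bar> \<le> 1" using n by (simp add: inverse_le_1_iff)
    ultimately have "(n *\<^sub>R x - (b1 - b2)) /\<^sub>R n \<in> Uset \<nu> \<rho>"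
      using U_scale_le1[OF P _ inv1] by blast
    moreover have "(n *\<^sub>R x - (b1 - b2)) /\<^sub>R n = x - c"
      using n unfolding c_def by (simp add: scaleR_diff_right)
    ultimately show "\<exists>c. T c \<in> Uset \<mu> t \<and> x - c \<in> Uset \<nu> \<rho>" using Tc by auto
  qed
qed


lemma cont0:
  assumes P: "PN_space \<nu>" and Q: "PN_space \<mu>" and C: "strongly_complete \<nu>"
    and D: "strongly_complete \<mu>" and L: "linear T"
    and G: "\<And>xs x y. strong_conv \<nu> xs x \<Longrightarrow> strong_conv \<mu> (\<lambda>n. T (xs n)) y \<Longrightarrow> y = T x"
    and t: "t > 0"
  shows "\<exists>s>0. \<forall>x\<in>Uset \<nu> s. T x \<in> Uset \<mu> t"
proof -
  have "\<forall>k. \<exists>s>0. \<forall>x\<in>Uset \<nu> s. \<forall>\<rho>>0. \<exists>c. T c \<in> Uset \<mu> (t / 2^(k+2)) \<and> x - c \<in> Uset \<nu> \<rho>"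
    using almost[OF P Q C L] t by simp
  then obtain s where s0: "\<And>k. s k > 0"
    and s: "\<And>k x \<rho>. x \<in> Uset \<nu> (s k) \<Longrightarrow> \<rho> > 0 \<Longrightarrow> \<exists>c. T c \<in> Uset \<mu> (t / 2^(k+2)) \<and> x - c \<in> Uset \<nu> \<rho>"
    by metis
  show ?thesis
  proof (intro exI[of _ "s 0"] conjI ballI)
    show "s 0 > 0" by (rule s0)
    fix x assume x: "x \<in> Uset \<nu> (s 0)"
    define PP where "PP n e \<longleftrightarrow> e \<in> Uset \<nu> (s n) \<and> (n = 0 \<longrightarrow> e = x)" for n e
    define QQ where "QQ n e e' \<longleftrightarrow> T (e - e') \<in> Uset \<mu> (t / 2^(n+2)) \<and> e' \<in> Uset \<nu> ((1/2)^n)" for n e e'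
    have "\<exists>f. \<forall>n. PP n (f n) \<and> QQ n (f n) (f (Suc n))"
    proof (rule dependent_nat_choice)
      show "\<exists>e. PP 0 e" using x unfolding PP_def by auto
    next
      fix e n assume "PP n e"
      then have e: "e \<in> Uset \<nu> (s n)" unfolding PP_def by simp
      have "min (s (Suc n)) ((1/2)^n) > 0" using s0 by simp
      from s[OF e this] obtain c where c: "T c \<in> Uset \<mu> (t / 2^(n+2))"
        "e - c \<in> Uset \<nu> (min (s (Suc n)) ((1/2)^n))" by blast
      have "e - c \<in> Uset \<nu> (s (Suc n))" "e - c \<in> Uset \<nu> ((1/2)^n)"
        using U_mono[OF P _ c(2)] by auto
      then show "\<exists>e'. PP (Suc n) e' \<and> QQ n e e'"
        using c(1) unfolding PP_def QQ_def by (intro exI[of _ "e - c"]) auto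
    qed
    then obtain f where f: "\<And>n. PP n (f n) \<and> QQ n (f n) (f (Suc n))" by blast
    have f0: "f 0 = x" using f[of 0] unfolding PP_def by simp
    have fT: "T (f n) - T (f (Suc n)) \<in> Uset \<mu> (t / 2^(n+2))" for n
      using f[of n] unfolding QQ_def by (simp add: linear_diff[OF L])
    have fs: "f (Suc n) \<in> Uset \<nu> ((1/2)^n)" for n
      using f[of n] unfolding QQ_def by simp
    have inv: "n < m \<Longrightarrow> T (f n) - T (f m) \<in> Uset \<mu> (t / 2^(n+1) - t / 2^(m+1))" for n m
    proof (induction m)
      case 0 then show ?case by simp
    next
      case (Suc m)
      show ?case
      proof (cases "n = m")
        case True
        have "t / 2^(n+1) - t / 2^(Suc n+1) = t / 2^(n+2)" by simp
        then show ?thesis using fT[of n] True by simp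
      next
        case False
        then have "n < m" using Suc.prems by simp
        then have s1: "T (f n) - T (f m) + (T (f m) - T (f (Suc m)))
            \<in> Uset \<mu> (t / 2^(n+1) - t / 2^(m+1) + t / 2^(m+2))"
          using U_add[OF Q Suc.IH fT[of m]] by simp
        have eq: "t / 2^(n+1) - t / 2^(m+1) + t / 2^(m+2) = t / 2^(n+1) - t / 2^(Suc m+1)" by simp
        have "T (f n) - T (f m) + (T (f m) - T (f (Suc m))) = T (f n) - T (f (Suc m))" by simp
        then show ?thesis using s1 eq by simp
      qed
    qed
    define xs where "xs n = x - f n" for n
    have Txs: "T (xs n) = T (f 0) - T (f n)" for n
      unfolding xs_def f0 by (simp add: linear_diff[OF L])
    have conv: "strong_conv \<nu> xs x"
      unfolding strong_conv_def nbhd_eq eventually_sequentially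
    proof (intro allI impI)
      fix e :: real assume e: "e > 0"
      obtain N where N: "(1/2::real)^N < e" using real_arch_pow_inv[of e "1/2"] e by auto
      show "\<exists>M. \<forall>n\<ge>M. xs n \<in> {q. x - q \<in> Uset \<nu> e}"
      proof (intro exI[of _ "Suc N"] allI impI)
        fix n assume n: "n \<ge> Suc N"
        then obtain m where m: "n = Suc m" "m \<ge> N" by (cases n) auto
        have "(1/2::real)^m \<le> (1/2)^N" using m by (intro power_decreasing) auto
        then have "(1/2::real)^m \<le> e" using N by linarith
        then have "f n \<in> Uset \<nu> e" using U_mono[OF P _ fs[of m]] m by simp
        then show "xs n \<in> {q. x - q \<in> Uset \<nu> e}" unfolding xs_def by simp
      qed
    qed
    have gC: "m < n \<Longrightarrow> T (xs m) - T (xs n) \<in> Uset \<mu> (t / 2 * (1/2)^m)" for m n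
    proof -
      assume mn: "m < n"
      have "- (T (f m) - T (f n)) \<in> Uset \<mu> (t / 2^(m+1) - t / 2^(n+1))"
        using U_neg[OF Q inv[OF mn]] .
      moreover have "t / 2^(m+1) - t / 2^(n+1) \<le> t / 2 * (1/2)^m"
        using t by (simp add: power_one_over field_simps)
      ultimately have "- (T (f m) - T (f n)) \<in> Uset \<mu> (t / 2 * (1/2)^m)"
        using U_mono[OF Q] by blast
      then show ?thesis unfolding Txs by simp
    qed
    have "strong_Cauchy \<mu> (\<lambda>n. T (xs n))"
      by (rule geom_Cauchy[OF Q gC, where C="t/2"]) (use t in auto)
    then obtain y where y: "strong_conv \<mu> (\<lambda>n. T (xs n)) y" using D unfolding strongly_complete_def by blast
    have yT: "y = T x" using G[OF conv y] .
    have "eventually (\<lambda>n. T (xs n) \<in> strong_nbhd \<mu> y (t/4)) sequentially"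
      using y t unfolding strong_conv_def by simp
    then obtain M where M: "\<And>n. n \<ge> M \<Longrightarrow> y - T (xs n) \<in> Uset \<mu> (t/4)"
      unfolding eventually_sequentially nbhd_eq by blast
    define n where "n = Suc M"
    have "T (f 0) - T (f n) \<in> Uset \<mu> (t / 2^(0+1) - t / 2^(n+1))"
      using inv[of 0 n] unfolding n_def by simp
    moreover have "t / 2^(0+1) - t / 2^(n+1) \<le> t / 2" using t by simp
    ultimately have a1: "T (xs n) \<in> Uset \<mu> (t/2)" unfolding Txs using U_mono[OF Q] by blast
    have "T (xs n) + (y - T (xs n)) \<in> Uset \<mu> (t/2 + t/4)"
      using U_add[OF Q a1 M[of n]] n_def by simp
    then have "y \<in> Uset \<mu> (t/2 + t/4)" by simp
    then show "T x \<in> Uset \<mu> t" using U_mono[OF Q, of "t/2 + t/4" t] t yT by simp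
  qed
qed


lemma istop:
  assumes P: "PN_space \<nu>"
  shows "istopology (\<lambda>U. \<forall>p\<in>U. \<exists>t>0. strong_nbhd \<nu> p t \<subseteq> U)"
  unfolding istopology_def
proof (intro conjI allI impI)
  fix S T :: "'a set"
  assume S: "\<forall>p\<in>S. \<exists>t>0. strong_nbhd \<nu> p t \<subseteq> S" and T: "\<forall>p\<in>T. \<exists>t>0. strong_nbhd \<nu> p t \<subseteq> T"
  show "\<forall>p\<in>S \<inter> T. \<exists>t>0. strong_nbhd \<nu> p t \<subseteq> S \<inter> T"
  proof
    fix p assume "p \<in> S \<inter> T"
    then obtain t1 t2 where t: "t1 > 0" "t2 > 0" "strong_nbhd \<nu> p t1 \<subseteq> S" "strong_nbhd \<nu> p t2 \<subseteq> T"
      using S T by blast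
    have s1: "strong_nbhd \<nu> p (min t1 t2) \<subseteq> strong_nbhd \<nu> p t1"
      unfolding nbhd_eq using U_mono[OF P, of "min t1 t2" t1] by auto
    have s2: "strong_nbhd \<nu> p (min t1 t2) \<subseteq> strong_nbhd \<nu> p t2"
      unfolding nbhd_eq using U_mono[OF P, of "min t1 t2" t2] by auto
    have m: "min t1 t2 > 0" using t by simp
    show "\<exists>t>0. strong_nbhd \<nu> p t \<subseteq> S \<inter> T"
      using m s1 s2 t(3,4) by blast
  qed
next
  fix K :: "'a set set"
  assume K: "\<forall>K\<in>K. \<forall>p\<in>K. \<exists>t>0. strong_nbhd \<nu> p t \<subseteq> K"
  show "\<forall>p\<in>\<Union>K. \<exists>t>0. strong_nbhd \<nu> p t \<subseteq> \<Union>K"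
  proof
    fix p assume "p \<in> \<Union>K"
    then obtain k where k: "k \<in> K" "p \<in> k" by blast
    then obtain t where "t > 0" "strong_nbhd \<nu> p t \<subseteq> k" using K by blast
    then show "\<exists>t>0. strong_nbhd \<nu> p t \<subseteq> \<Union>K" using k(1) by blast
  qed
qed

lemma openin_strong:
  "PN_space \<nu> \<Longrightarrow> openin (strong_topology \<nu>) U \<longleftrightarrow> (\<forall>p\<in>U. \<exists>t>0. strong_nbhd \<nu> p t \<subseteq> U)"
  unfolding strong_topology_def by (subst topology_inverse'[OF istop]) auto

lemma topspace_strong: "PN_space \<nu> \<Longrightarrow> topspace (strong_topology \<nu>) = UNIV"
proof -
  assume P: "PN_space \<nu>"
  have "openin (strong_topology \<nu>) UNIV" unfolding openin_strong[OF P] using zero_less_one by blast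
  then show ?thesis using openin_subset by blast
qed

theorem theorem4p10:
  fixes \<nu> :: "'a::real_vector \<Rightarrow> real \<Rightarrow> real" and \<mu> :: "'b::real_vector \<Rightarrow> real \<Rightarrow> real"
    and T :: "'a \<Rightarrow> 'b"
  assumes "PN_space \<nu>" and "PN_space \<mu>"
    and "strongly_complete \<nu>" and "strongly_complete \<mu>"
    and "linear T"
    and "\<And>xs x y. strong_conv \<nu> xs x \<Longrightarrow> strong_conv \<mu> (\<lambda>n. T (xs n)) y \<Longrightarrow> y = T x"
  shows "T \<in> bounded_ops \<nu> \<mu>"
proof -
  note P = assms(1) and Q = assms(2) and L = assms(5)
  have "continuous_map (strong_topology \<nu>) (strong_topology \<mu>) T"
    unfolding continuous_map_def topspace_strong[OF P] topspace_strong[OF Q]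
  proof (intro conjI allI impI)
    show "T \<in> UNIV \<rightarrow> UNIV" by simp
    fix U assume "openin (strong_topology \<mu>) U"
    then have U: "\<forall>p\<in>U. \<exists>t>0. strong_nbhd \<mu> p t \<subseteq> U" using openin_strong[OF Q] by blast
    show "openin (strong_topology \<nu>) {x \<in> UNIV. T x \<in> U}"
      unfolding openin_strong[OF P]
    proof
      fix p assume "p \<in> {x \<in> UNIV. T x \<in> U}"
      then obtain t where t: "t > 0" "strong_nbhd \<mu> (T p) t \<subseteq> U" using U by auto
      have "\<exists>s>0. \<forall>x\<in>Uset \<nu> s. T x \<in> Uset \<mu> t"
        by (rule cont0[OF P Q assms(3) assms(4) L]) (use assms(6) t(1) in blast)+
      then obtain s where s: "s > 0" "\<And>x. x \<in> Uset \<nu> s \<Longrightarrow> T x \<in> Uset \<mu> t"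
        by blast
      have "strong_nbhd \<nu> p s \<subseteq> {x \<in> UNIV. T x \<in> U}"
      proof
        fix q assume "q \<in> strong_nbhd \<nu> p s"
        then have "T (p - q) \<in> Uset \<mu> t" using s unfolding nbhd_eq by blast
        then have "T q \<in> strong_nbhd \<mu> (T p) t" unfolding nbhd_eq by (simp add: linear_diff[OF L])
        then show "q \<in> {x \<in> UNIV. T x \<in> U}" using t by blast
      qed
      then show "\<exists>s>0. strong_nbhd \<nu> p s \<subseteq> {x \<in> UNIV. T x \<in> U}" using s by blast
    qed
  qed
  then show ?thesis unfolding bounded_ops_def using L by blast
qed

end
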